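(* Let $A:\mathbb{R}^n\rightrightarrows\mathbb{R}^n$ be maximally monotone, let $x^*$ satisfy $0\in A(x^* )$, and let $\tilde A=I-J_A$ with $J_A=(I+A)^{-1}$. Let $r\geqslant2$ and $0<C\leqslant1$. Let $(x_k),(z_k)$ be sequences in $\mathbb{R}^n$ with $x_0=z_0$ satisfying, for all $k\geqslant0$, $$z_k=\frac{k}{r}(x_{k+1}-x_k)+\Big(1+\frac{k}{r}\Big)\tilde A(x_{k+1})+x_{k+1},\qquad z_{k+1}=z_k-\frac{C}{r}\tilde A(x_{k+1}).$$ Then for every $k\geqslant1$, $$\|\tilde A(x_k)\|^2\leqslant\frac{(r^3-r^2)\|x_0-x^*\|^2}{Ck[k+3r-C(k+1)]},\qquad \langle\tilde A(x_k),x_k-x^*\rangle\leqslant\frac{(r^2-r)\|x_0-x^*\|^2}{2Ck}.$$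
   Context: $J_A$ is the resolvent of $A$ and $\tilde A=I-J_A$ its Yosida approximation. $\|\cdot\|$ is the Euclidean norm. *)

theory Defs
  imports "HOL-Analysis.Analysis"
begin

definition monotone_op :: "('a::real_inner \<Rightarrow> 'a set) \<Rightarrow> bool" where
  "monotone_op A \<longleftrightarrow> (\<forall>x y u v. u \<in> A x \<longrightarrow> v \<in> A y \<longrightarrow> inner (x - y) (u - v) \<ge> 0)"

definition maximal_monotone :: "('a::real_inner \<Rightarrow> 'a set) \<Rightarrow> bool" where
  "maximal_monotone A \<longleftrightarrow> monotone_op A \<and>
     (\<forall>B. monotone_op B \<and> (\<forall>x. A x \<subseteq> B x) \<longrightarrow> B = A)"

text \<open>Resolvent J_A = (I + A)^{-1}: J_A x is the point p with x \<in> p + A p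
(single-valued and everywhere defined for maximally monotone A by Minty's theorem).\<close>
definition resolvent :: "('a::real_inner \<Rightarrow> 'a set) \<Rightarrow> 'a \<Rightarrow> 'a" where
  "resolvent A x = (THE p. x - p \<in> A p)"

definition yosida :: "('a::real_inner \<Rightarrow> 'a set) \<Rightarrow> 'a \<Rightarrow> 'a" where
  "yosida A x = x - resolvent A x"

end

theory Submission
  imports Defs
begin

lemma aux_inner: "inner (e - d) d = inner d e - inner d (d::'a::real_inner)"
  by (simp add: inner_diff_left inner_diff_right inner_commute)
lemma aux_ball:
  fixes p y w :: "'a::real_inner"
  shows "inner (p - y) (p + w) = (norm (p - (1/2) *\<^sub>R (y - w)))^2 - (norm (y + w) / 2)^2"
proof -
  have "(norm (p - (1/2) *\<^sub>R (y - w)))^2 = inner p p - inner p y + inner p w + (inner y y - 2 * inner y w + inner w w)/4"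
    by (simp add: power2_norm_eq_inner inner_add_left inner_add_right inner_diff_left inner_diff_right inner_commute algebra_simps)
      (simp add: field_simps)
  moreover have "(norm (y + w) / 2)^2 = (inner y y + 2 * inner y w + inner w w)/4"
    by (simp add: power_divide power2_norm_eq_inner inner_add_left inner_add_right inner_commute)
  moreover have "inner (p - y) (p + w) = inner p p + inner p w - inner p y - inner y w"
    by (simp add: inner_add_right inner_diff_left inner_diff_right inner_commute)
  ultimately show ?thesis by (simp add: field_simps)
qed


lemma real_step_identity:
  fixes ua ub wa wb uu uw ww aa ab bb k r C ZZ wZ uZ :: real
  assumes ZZ: "ZZ = k^2*(aa - 2*ab + bb) + (k+r)^2*uu + r^2*aa + 2*k*(k+r)*(ua - ub) + 2*k*r*(aa - ab) + 2*r*(k+r)*ua"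
   and wZ: "wZ = k*(wa - wb) + (k+r)*uw + r*wa"
   and uZ: "uZ = k*(ua - ub) + (k+r)*uu + r*ua"
  defines "mu \<equiv> 2*C*k*(k+r)" and "nu \<equiv> 2*r*(r-1)*C"
    and "p \<equiv> 3*C*k^2 + (5*C*r - 2*C - C^2)*k + 4*r^2*C - 3*r*C - C - r*C^2"
    and "q \<equiv> 3*C*k^2 + (3*C*r - C^2)*k"
  shows "4*p*((2*C*r*k * wb + (C*k^2 + (C*r-C^2)*k) * ww + (r-1)*ZZ - 2*C*k * wZ)
    - (2*C*r*(k+1) * ua + (C*(k+1)^2 + (C*r - C^2)*(k+1)) * uu + (r-1) * (ZZ - 2*C*uZ + C^2*uu) - 2*C*(k+1) * (uZ - C*uu)))
   = 4*p*mu*(ua - ub - wa + wb - uu + 2*uw - ww) + 4*p*nu*(ua - uu)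
     + (4*p^2*uu - 12*p*mu*uw + 9*mu^2*ww) + (4*p*q - 9*mu^2) * ww"
  unfolding ZZ wZ uZ mu_def nu_def p_def q_def
  by algebra

lemma poly_p_pos:
  fixes k r C :: real
  assumes "r \<ge> 2" "0 < C" "C \<le> 1" "k \<ge> 0"
  shows "3*C*k^2 + (5*C*r - 2*C - C^2)*k + 4*r^2*C - 3*r*C - C - r*C^2 > 0"
proof -
  have a0: "5*C*r - 2*C - C^2 = C*(5*r - 2 - C)" by (simp add: algebra_simps power2_eq_square)
  have a: "5*C*r - 2*C - C^2 \<ge> 0" unfolding a0 using assms by simp
  have b: "4*r^2*C - 3*r*C - C - r*C^2 > 0"
  proof -
    have "4*r^2*C - 3*r*C - C - r*C^2 = C*(4*r^2 - 3*r - 1 - r*C)" by (simp add: algebra_simps power2_eq_square)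
    moreover have "4*r^2 - 3*r - 1 - r*C > 0"
    proof -
      have "r*C \<le> r" using assms by (simp add: mult_left_le)
      moreover have "r^2 \<ge> 2*r" using assms by (simp add: power2_eq_square)
      ultimately show ?thesis using assms by linarith
    qed
    ultimately show ?thesis using assms by simp
  qed
  have "3*C*k^2 \<ge> 0" using assms by simp
  moreover have "(5*C*r - 2*C - C^2)*k \<ge> 0" using a assms by simp
  ultimately show ?thesis using b by linarith
qed

lemma poly_disc:
  fixes k r C :: real
  assumes "r \<ge> 2" "0 < C" "C \<le> 1" "k \<ge> 0"
  shows "4*(3*C*k^2 + (5*C*r - 2*C - C^2)*k + 4*r^2*C - 3*r*C - C - r*C^2)*(3*C*k^2 + (3*C*r - C^2)*k) - 9*(2*C*k*(k+r))^2 \<ge> 0"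
proof -
  have id: "4*(3*C*k^2 + (5*C*r - 2*C - C^2)*k + 4*r^2*C - 3*r*C - C - r*C^2)*(3*C*k^2 + (3*C*r - C^2)*k) - 9*(2*C*k*(k+r))^2
     = 4*k*C^2*((6*r-6-6*C)*k^2 + (18*r^2 - 11*r*C - 15*r + 2*C + C^2 - 3)*k + (4*r^2-3*r-1-r*C)*(3*r-C))"
    by algebra
  have rC: "r*C \<le> r" using assms by (simp add: mult_left_le)
  have r2: "r^2 \<ge> 2*r" using assms by (simp add: power2_eq_square)
  have c1: "6*r-6-6*C \<ge> 0" using assms by linarith
  have c2: "18*r^2 - 11*r*C - 15*r + 2*C + C^2 - 3 \<ge> 0"
  proof -
    have "18*r^2 - 26*r - 3 \<ge> 0"
    proof -
      have "r*(18*r - 26) \<ge> 2*10" using assms by (intro mult_mono) auto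
      thus ?thesis by (simp add: algebra_simps power2_eq_square)
    qed
    moreover have "C^2 \<ge> 0" by simp
    ultimately show ?thesis using rC assms by linarith
  qed
  have c3: "4*r^2-3*r-1-r*C \<ge> 0" using rC r2 assms by linarith
  have c4: "3*r - C \<ge> 0" using assms by linarith
  have "(6*r-6-6*C)*k^2 \<ge> 0" using c1 by simp
  moreover have "(18*r^2 - 11*r*C - 15*r + 2*C + C^2 - 3)*k \<ge> 0" using c2 assms by simp
  moreover have "(4*r^2-3*r-1-r*C)*(3*r-C) \<ge> 0" using c3 c4 by simp
  ultimately have "(6*r-6-6*C)*k^2 + (18*r^2 - 11*r*C - 15*r + 2*C + C^2 - 3)*k + (4*r^2-3*r-1-r*C)*(3*r-C) \<ge> 0" by linarith
  then show ?thesis unfolding id using assms by simp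
qed

lemma lyap_step:
  fixes a b u v zk zk1 :: "'a::real_inner" and k r C :: real
  assumes r: "r \<ge> 2" and C: "0 < C" "C \<le> 1" and k: "k \<ge> 0"
    and zk: "zk = (k/r) *\<^sub>R (a - b) + (1 + k/r) *\<^sub>R u + a"
    and zk1: "zk1 = zk - (C/r) *\<^sub>R u"
    and s1: "inner u a \<ge> inner u u"
    and s2: "inner (u - v) (a - b) \<ge> inner (u - v) (u - v)"
  shows "2*C*r*(k+1) * inner u a + (C*(k+1)^2 + (C*r - C^2)*(k+1)) * inner u u + r^2*(r-1) * inner zk1 zk1 - 2*C*r*(k+1) * inner u zk1
       \<le> 2*C*r*k * inner v b + (C*k^2 + (C*r-C^2)*k) * inner v v + r^2*(r-1)*inner zk zk - 2*C*r*k * inner v zk"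
proof -
  have r0: "r \<noteq> 0" using r by auto
  define Z where "Z = k *\<^sub>R (a - b) + (k+r) *\<^sub>R u + r *\<^sub>R a"
  have kr: "(k+r)/r = 1 + k/r" using r0 by (simp add: field_simps)
  have zkZ: "zk = (1/r) *\<^sub>R Z"
    unfolding zk Z_def using r0 by (simp add: scaleR_add_right kr)
  have zk1Z: "zk1 = (1/r) *\<^sub>R (Z - C *\<^sub>R u)"
    unfolding zk1 zkZ using r0 by (simp add: scaleR_diff_right)
  have ZZ: "inner Z Z = k^2*(inner a a - 2*inner a b + inner b b) + (k+r)^2*inner u u + r^2*inner a a + 2*k*(k+r)*(inner u a - inner u b) + 2*k*r*(inner a a - inner a b) + 2*r*(k+r)*inner u a"
    unfolding Z_def
    by (simp add: inner_add_left inner_add_right inner_diff_left inner_diff_right inner_commute algebra_simps power2_eq_square)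
  have vZ: "inner v Z = k*(inner v a - inner v b) + (k+r)*inner u v + r*inner v a"
    unfolding Z_def by (simp add: inner_add_right inner_diff_right inner_commute algebra_simps)
  have uZ: "inner u Z = k*(inner u a - inner u b) + (k+r)*inner u u + r*inner u a"
    unfolding Z_def by (simp add: inner_add_right inner_diff_right inner_commute algebra_simps)
  have e1: "r^2*(r-1)*inner zk zk = (r-1) * inner Z Z"
    unfolding zkZ using r0 by (simp add: power2_eq_square)
  have e2: "2*C*r*k * inner v zk = 2*C*k * inner v Z"
    unfolding zkZ using r0 by simp
  have e3: "r^2*(r-1) * inner zk1 zk1 = (r-1) * (inner Z Z - 2*C*inner u Z + C^2*inner u u)"
  proof -
    have i1: "inner zk1 zk1 = inner (Z - C *\<^sub>R u) (Z - C *\<^sub>R u) / r^2"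
      by (simp add: zk1Z power2_eq_square)
    have i2: "inner (Z - C *\<^sub>R u) (Z - C *\<^sub>R u) = inner Z Z - 2*C*inner u Z + C^2*inner u u"
      by (simp add: inner_diff_left inner_diff_right inner_commute power2_eq_square algebra_simps)
    show ?thesis unfolding i1 i2 using r0 by simp
  qed
  have e4: "2*C*r*(k+1) * inner u zk1 = 2*C*(k+1) * (inner u Z - C*inner u u)"
    unfolding zk1Z using r0 by (simp add: inner_diff_right algebra_simps)
  define mu where "mu = 2*C*k*(k+r)"
  define nu where "nu = 2*r*(r-1)*C"
  define p where "p = 3*C*k^2 + (5*C*r - 2*C - C^2)*k + 4*r^2*C - 3*r*C - C - r*C^2"
  define q where "q = 3*C*k^2 + (3*C*r - C^2)*k"
  have idt: "4*p*((2*C*r*k * inner v b + (C*k^2 + (C*r-C^2)*k) * inner v v + (r-1)*inner Z Z - 2*C*k * inner v Z)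
    - (2*C*r*(k+1) * inner u a + (C*(k+1)^2 + (C*r - C^2)*(k+1)) * inner u u + (r-1) * (inner Z Z - 2*C*inner u Z + C^2*inner u u) - 2*C*(k+1) * (inner u Z - C*inner u u)))
   = 4*p*mu*(inner u a - inner u b - inner v a + inner v b - inner u u + 2*inner u v - inner v v) + 4*p*nu*(inner u a - inner u u)
     + (4*p^2*inner u u - 12*p*mu*inner u v + 9*mu^2*inner v v) + (4*p*q - 9*mu^2) * inner v v"
    unfolding mu_def nu_def p_def q_def by (rule real_step_identity[OF ZZ vZ uZ])
  have s2': "inner u a - inner u b - inner v a + inner v b - inner u u + 2*inner u v - inner v v \<ge> 0"
    using s2 by (simp add: inner_diff_left inner_diff_right inner_commute algebra_simps)
  have sq: "4*p^2*inner u u - 12*p*mu*inner u v + 9*mu^2*inner v v \<ge> 0"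
  proof -
    have "0 \<le> inner ((2*p) *\<^sub>R u - (3*mu) *\<^sub>R v) ((2*p) *\<^sub>R u - (3*mu) *\<^sub>R v)" by simp
    also have "\<dots> = 4*p^2*inner u u - 12*p*mu*inner u v + 9*mu^2*inner v v"
      by (simp add: inner_diff_left inner_diff_right inner_commute power2_eq_square algebra_simps)
    finally show ?thesis .
  qed
  have pp: "p > 0" unfolding p_def using poly_p_pos[OF r C k] .
  have disc: "4*p*q - 9*mu^2 \<ge> 0" unfolding p_def q_def mu_def using poly_disc[OF r C k] by simp
  have mu0: "mu \<ge> 0" unfolding mu_def using C k r by simp
  have nu0: "nu \<ge> 0" unfolding nu_def using C r by simp
  have "4*p*mu*(inner u a - inner u b - inner v a + inner v b - inner u u + 2*inner u v - inner v v) \<ge> 0"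
    using pp mu0 s2' by simp
  moreover have "4*p*nu*(inner u a - inner u u) \<ge> 0" using pp nu0 s1 by simp
  moreover have "(4*p*q - 9*mu^2) * inner v v \<ge> 0" using disc by simp
  ultimately have "4*p*((2*C*r*k * inner v b + (C*k^2 + (C*r-C^2)*k) * inner v v + (r-1)*inner Z Z - 2*C*k * inner v Z)
    - (2*C*r*(k+1) * inner u a + (C*(k+1)^2 + (C*r - C^2)*(k+1)) * inner u u + (r-1) * (inner Z Z - 2*C*inner u Z + C^2*inner u u) - 2*C*(k+1) * (inner u Z - C*inner u u))) \<ge> 0"
    unfolding idt using sq by linarith
  then have "(2*C*r*k * inner v b + (C*k^2 + (C*r-C^2)*k) * inner v v + (r-1)*inner Z Z - 2*C*k * inner v Z)
    - (2*C*r*(k+1) * inner u a + (C*(k+1)^2 + (C*r - C^2)*(k+1)) * inner u u + (r-1) * (inner Z Z - 2*C*inner u Z + C^2*inner u u) - 2*C*(k+1) * (inner u Z - C*inner u u)) \<ge> 0"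
    using pp by (simp add: zero_le_mult_iff)
  then show ?thesis unfolding e1 e2 e3 e4 by linarith
qed


lemma Max_cont:
  fixes f :: "'i \<Rightarrow> 'a::topological_space \<Rightarrow> real"
  assumes "finite P" "P \<noteq> {}" "\<And>i. i \<in> P \<Longrightarrow> continuous_on S (f i)"
  shows "continuous_on S (\<lambda>x. Max ((\<lambda>i. f i x) ` P))"
  using assms
proof (induction P rule: finite_ne_induct)
  case (singleton i) then show ?case by simp
next
  case (insert i F)
  have "(\<lambda>x. Max ((\<lambda>j. f j x) ` insert i F)) = (\<lambda>x. max (f i x) (Max ((\<lambda>j. f j x) ` F)))"
    using insert by (auto simp: Max_insert)
  then show ?case using insert by (auto intro!: continuous_on_max)
qed

lemma weight_ineq:
  fixes x u :: "'i \<Rightarrow> 'a::real_inner"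
  assumes fin: "finite I" and l: "sum l I = 1"
    and mono: "\<And>i j. i \<in> I \<Longrightarrow> j \<in> I \<Longrightarrow> inner (x i - x j) (u i - u j) \<ge> 0"
    and lpos: "\<And>i. i \<in> I \<Longrightarrow> 0 \<le> l i"
  shows "inner (\<Sum>i\<in>I. l i *\<^sub>R x i) (\<Sum>i\<in>I. l i *\<^sub>R u i) \<le> (\<Sum>i\<in>I. l i * inner (x i) (u i))"
proof -
  define T where "T = (\<Sum>i\<in>I. l i * inner (x i) (u i))"
  define M where "M = inner (\<Sum>i\<in>I. l i *\<^sub>R x i) (\<Sum>i\<in>I. l i *\<^sub>R u i)"
  have e1: "(\<Sum>i\<in>I. \<Sum>j\<in>I. l i * l j * inner (x j) (u i)) = M"
    unfolding M_def by (simp add: inner_sum_left inner_sum_right sum_distrib_left mult.assoc)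
  have e2: "(\<Sum>i\<in>I. \<Sum>j\<in>I. l i * l j * inner (x i) (u j)) = M"
  proof -
    have "(\<Sum>i\<in>I. \<Sum>j\<in>I. l i * l j * inner (x i) (u j)) = (\<Sum>j\<in>I. \<Sum>i\<in>I. l i * l j * inner (x i) (u j))"
      by (rule sum.swap)
    also have "\<dots> = (\<Sum>i\<in>I. \<Sum>j\<in>I. l i * l j * inner (x j) (u i))"
      by (simp add: mult.commute)
    finally show ?thesis using e1 by simp
  qed
  have e3: "(\<Sum>i\<in>I. \<Sum>j\<in>I. l i * l j * inner (x i) (u i)) = T"
  proof -
    have "(\<Sum>i\<in>I. \<Sum>j\<in>I. l i * l j * inner (x i) (u i)) = (\<Sum>i\<in>I. l i * inner (x i) (u i) * (\<Sum>j\<in>I. l j))"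
    proof (intro sum.cong refl)
      fix i
      have "(\<Sum>j\<in>I. l i * l j * inner (x i) (u i)) = (\<Sum>j\<in>I. l j * (l i * inner (x i) (u i)))"
        by (simp add: mult_ac)
      also have "\<dots> = (\<Sum>j\<in>I. l j) * (l i * inner (x i) (u i))" by (rule sum_distrib_right[symmetric])
      finally show "(\<Sum>j\<in>I. l i * l j * inner (x i) (u i)) = l i * inner (x i) (u i) * (\<Sum>j\<in>I. l j)"
        by simp
    qed
    then show ?thesis using l T_def by simp
  qed
  have e4: "(\<Sum>i\<in>I. \<Sum>j\<in>I. l i * l j * inner (x j) (u j)) = T"
    using e3 by (subst sum.swap) (simp add: mult.commute)
  have "0 \<le> (\<Sum>i\<in>I. \<Sum>j\<in>I. l i * l j * inner (x i - x j) (u i - u j))"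
    using mono lpos by (intro sum_nonneg) auto
  also have "\<dots> = (\<Sum>i\<in>I. \<Sum>j\<in>I. l i * l j * inner (x i) (u i)) - (\<Sum>i\<in>I. \<Sum>j\<in>I. l i * l j * inner (x i) (u j))
     - (\<Sum>i\<in>I. \<Sum>j\<in>I. l i * l j * inner (x j) (u i)) + (\<Sum>i\<in>I. \<Sum>j\<in>I. l i * l j * inner (x j) (u j))"
    by (simp add: inner_diff_left inner_diff_right algebra_simps sum.distrib sum_subtractf)
  finally show ?thesis unfolding e1 e2 e3 e4 T_def[symmetric] M_def[symmetric] by simp
qed

lemma finite_minty:
  fixes P :: "('a::euclidean_space \<times> 'a) set"
  assumes fin: "finite P" and ne: "P \<noteq> {}"
    and mono: "\<And>i j. i \<in> P \<Longrightarrow> j \<in> P \<Longrightarrow> inner (fst i - fst j) (snd i - snd j) \<ge> 0"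
  shows "\<exists>p. \<forall>i\<in>P. inner (p - fst i) (p + snd i) \<le> 0"
proof -
  define g where "g i p = inner (p - fst i) (p + snd i)" for i :: "'a\<times>'a" and p
  define c where "c i = (1/2) *\<^sub>R (fst i - snd i)" for i :: "'a\<times>'a"
  define F where "F p = Max ((\<lambda>i. g i p) ` P)" for p
  define S where "S = convex hull (c ` P)"
  have cS: "compact S" "convex S" "S \<noteq> {}" using fin ne
    by (auto simp: S_def finite_imp_compact_convex_hull)
  have contg: "continuous_on T (g i)" for i T unfolding g_def by (intro continuous_intros)
  have "continuous_on S F" unfolding F_def by (rule Max_cont[OF fin ne contg])
  then obtain p where pS: "p \<in> S" and pmin: "\<forall>y\<in>S. F p \<le> F y"
    using continuous_attains_inf[OF cS(1) cS(3)] by blast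
  define t where "t = F p"
  have gle: "g i p \<le> t" if "i \<in> P" for i
    unfolding t_def F_def using fin that by (intro Max_ge) auto
  have "t \<in> (\<lambda>i. g i p) ` P" unfolding t_def F_def using fin ne by (intro Max_in) auto
  then obtain i0 where i0: "i0 \<in> P" "g i0 p = t" by auto
  define I where "I = {i\<in>P. g i p = t}"
  have i0I: "i0 \<in> I" using i0 by (simp add: I_def)
  have finI: "finite I" and IP: "I \<subseteq> P" using fin by (auto simp: I_def)
  have neI: "I \<noteq> {}" using i0I by blast
  define K where "K = convex hull (c ` I)"
  have pK: "p \<in> K"
  proof (rule ccontr)
    assume pK: "p \<notin> K"
    have Kc: "closed K" "convex K" "K \<noteq> {}" using finI neI
      by (auto simp: K_def finite_imp_compact_convex_hull compact_imp_closed)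
    have KS: "K \<subseteq> S" unfolding K_def S_def using IP by (intro hull_mono) auto
    define q where "q = closest_point K p"
    have qK: "q \<in> K" unfolding q_def using Kc by (intro closest_point_in_set) auto
    have qdot: "inner (p - q) (y - q) \<le> 0" if "y \<in> K" for y
      using any_closest_point_dot[OF Kc(2) Kc(1) qK that] closest_point_exists(2)[OF Kc(1) Kc(3), of p]
      unfolding q_def by blast
    define d where "d = q - p"
    have dd: "inner d d > 0" using pK qK unfolding d_def by auto
    have gexp: "g i (p + s *\<^sub>R d) = g i p + 2 * s * inner d (p - c i) + s^2 * inner d d" for i s
      unfolding g_def c_def
      by (simp add: inner_add_left inner_add_right inner_diff_left inner_diff_right inner_commute power2_eq_square algebra_simps)
    have act: "g i (p + s *\<^sub>R d) < t" if "i \<in> I" "0 < s" "s < 2" for i s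
    proof -
      have ci: "c i \<in> K" unfolding K_def using that(1) by (intro hull_inc) auto
      have "inner d (p - c i) = - inner d d + inner (p - q) (c i - q)"
        unfolding d_def by (simp add: inner_diff_left inner_diff_right inner_commute algebra_simps)
      then have "inner d (p - c i) \<le> - inner d d" using qdot[OF ci] by simp
      then have "g i (p + s *\<^sub>R d) \<le> t - 2 * s * inner d d + s^2 * inner d d"
      proof -
        have git: "g i p = t" using that(1) I_def by simp
        have "2 * s * inner d (p - c i) \<le> 2 * s * (- inner d d)"
          using \<open>inner d (p - c i) \<le> - inner d d\<close> that by (intro mult_left_mono) auto
        then show ?thesis using gexp[of i s] git by simp
      qed
      also have "\<dots> = t - s*(2 - s)*inner d d" by (simp add: algebra_simps power2_eq_square)
      also have "\<dots> < t" using that dd by simp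
      finally show ?thesis .
    qed
    have inact: "eventually (\<lambda>s. \<forall>i\<in>P-I. g i (p + s *\<^sub>R d) < t) (at_right 0)"
    proof (rule eventually_ball_finite)
      show "finite (P - I)" using fin by auto
      show "\<forall>i\<in>P-I. eventually (\<lambda>s. g i (p + s *\<^sub>R d) < t) (at_right 0)"
      proof
        fix i assume i: "i \<in> P - I"
        then have "i \<in> P" "g i p \<noteq> t" by (auto simp: I_def)
        then have lt: "g i p < t" using gle[of i] by simp
        have "((\<lambda>s. g i (p + s *\<^sub>R d)) \<longlongrightarrow> g i (p + 0 *\<^sub>R d)) (at_right (0::real))"
          unfolding g_def by (intro tendsto_intros)
        then have "((\<lambda>s. g i (p + s *\<^sub>R d)) \<longlongrightarrow> g i p) (at_right (0::real))" by simp
        then show "eventually (\<lambda>s. g i (p + s *\<^sub>R d) < t) (at_right 0)"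
          using lt by (rule order_tendstoD(2))
      qed
    qed
    then obtain b where b: "b > 0" "\<And>s. s > 0 \<Longrightarrow> s < b \<Longrightarrow> \<forall>i\<in>P-I. g i (p + s *\<^sub>R d) < t"
      unfolding eventually_at_right_field by auto
    define s where "s = min (b/2) (1/2)"
    have s: "0 < s" "s < b" "s < 1" using b by (auto simp: s_def)
    have all: "g i (p + s *\<^sub>R d) < t" if "i \<in> P" for i
      using that act[of i s] b(2)[OF s(1) s(2)] s by (cases "i \<in> I") auto
    have "F (p + s *\<^sub>R d) < t" unfolding F_def using fin ne all by simp
    moreover have "p + s *\<^sub>R d \<in> S"
    proof -
      have "(1 - s) *\<^sub>R p + s *\<^sub>R q \<in> S" using convexD[OF cS(2) pS] KS qK s by auto
      moreover have "(1 - s) *\<^sub>R p + s *\<^sub>R q = p + s *\<^sub>R d" unfolding d_def by (simp add: algebra_simps)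
      ultimately show ?thesis by simp
    qed
    ultimately show False using pmin t_def by force
  qed
  have "K = {sum (\<lambda>i. l i *\<^sub>R y i) I | l y. (\<forall>i\<in>I. l i \<ge> 0) \<and> sum l I = 1 \<and> (\<forall>i\<in>I. y i \<in> {c i})}"
  proof -
    have U: "(\<Union> ((\<lambda>i. {c i}) ` I)) = c ` I" by auto
    show ?thesis unfolding K_def U[symmetric] by (rule convex_hull_finite_union[OF finI]) auto
  qed
  then obtain l y where ly: "\<forall>i\<in>I. l i \<ge> 0" "sum l I = 1" "\<forall>i\<in>I. y i = c i" "p = sum (\<lambda>i. l i *\<^sub>R y i) I"
    using pK by auto
  have pc: "p = (\<Sum>i\<in>I. l i *\<^sub>R c i)" using ly(3,4) by simp
  define X where "X = (\<Sum>i\<in>I. l i *\<^sub>R fst i)"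
  define U where "U = (\<Sum>i\<in>I. l i *\<^sub>R snd i)"
  have pXU: "p = (1/2) *\<^sub>R (X - U)"
    unfolding pc X_def U_def c_def by (simp add: scaleR_right.sum scaleR_diff_right sum_subtractf)
  have tsum: "t = (\<Sum>i\<in>I. l i * g i p)"
  proof -
    have "(\<Sum>i\<in>I. l i * g i p) = (\<Sum>i\<in>I. l i * t)" by (rule sum.cong) (auto simp: I_def)
    also have "\<dots> = t" using ly(2) by (simp add: sum_distrib_right[symmetric])
    finally show ?thesis by simp
  qed
  have gsum: "(\<Sum>i\<in>I. l i * g i p) = (\<Sum>i\<in>I. l i) * inner p p + inner p U - inner X p - (\<Sum>i\<in>I. l i * inner (fst i) (snd i))"
    unfolding g_def X_def U_def
    by (simp add: inner_diff_left inner_add_right inner_sum_left inner_sum_right sum_distrib_left sum_distrib_right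
        sum.distrib sum_subtractf algebra_simps)
  have w: "inner X U \<le> (\<Sum>i\<in>I. l i * inner (fst i) (snd i))"
    unfolding X_def U_def
    using weight_ineq[OF finI ly(2), of fst snd] mono IP ly(1) by blast
  have "inner p p + inner p U - inner X p - inner X U = - (1/4) * inner (X + U) (X + U)"
    unfolding pXU by (simp add: inner_add_left inner_add_right inner_diff_left inner_diff_right inner_commute algebra_simps)
  moreover have "inner (X + U) (X + U) \<ge> 0" by simp
  moreover have "t = inner p p + inner p U - inner X p - (\<Sum>i\<in>I. l i * inner (fst i) (snd i))"
    using tsum gsum ly(2) by simp
  ultimately have "t \<le> 0" using w by linarith
  then have "\<forall>i\<in>P. g i p \<le> 0" using gle by force
  then show ?thesis unfolding g_def by blast
qed


lemma aux_swap: "inner (x - p) (u - q) = inner (p - x) (q - (u::'a::real_inner))"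
  by (metis inner_minus_left inner_minus_right minus_diff_eq minus_minus)

lemma aux_neg: "inner e ((b - p) - v) = - inner e (p + (v - (b::'a::real_inner)))"
proof -
  have h: "(b - p) - v = - (p + (v - b))" by (simp add: algebra_simps)
  show ?thesis unfolding h by (rule inner_minus_right)
qed

lemma minty_exists:
  fixes A :: "'a::euclidean_space \<Rightarrow> 'a set"
  assumes mm: "maximal_monotone A" and g0: "w0 \<in> A y0"
  shows "\<exists>p. b - p \<in> A p"
proof -
  have mono: "monotone_op A" using mm unfolding maximal_monotone_def by blast
  have monoA: "inner (x - y) (u - v) \<ge> 0" if "u \<in> A x" "v \<in> A y" for x y u v
    using mono that unfolding monotone_op_def by blast
  define Kx where "Kx i = {p. inner (p - fst i) (p + (snd i - b)) \<le> 0}" for i :: "'a \<times> 'a"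
  define G where "G = {i. snd i \<in> A (fst i)}"
  have cl: "closed (Kx i)" for i
    unfolding Kx_def by (intro closed_Collect_le continuous_intros)
  have bnd: "bounded (Kx i)" for i
  proof -
    define cc where "cc = (1/2) *\<^sub>R (fst i - (snd i - b))"
    define rho where "rho = norm (fst i + (snd i - b)) / 2"
    have "Kx i \<subseteq> cball cc rho"
    proof
      fix p assume "p \<in> Kx i"
      then have h: "inner (p - fst i) (p + (snd i - b)) \<le> 0" by (simp add: Kx_def)
      have "inner (p - fst i) (p + (snd i - b)) = (norm (p - cc))^2 - rho^2"
        unfolding cc_def rho_def by (rule aux_ball)
      then have "(norm (p - cc))^2 \<le> rho^2" using h by linarith
      moreover have "rho \<ge> 0" unfolding rho_def by simp
      ultimately have "norm (p - cc) \<le> rho" by (rule power2_le_imp_le)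
      then show "p \<in> cball cc rho" by (simp add: dist_norm norm_minus_commute)
    qed
    then show ?thesis by (rule bounded_subset[OF bounded_cball])
  qed
  have comp: "compact (Kx (y0, w0))" using cl bnd by (simp add: compact_eq_bounded_closed)
  have "Kx (y0,w0) \<inter> \<Inter> (Kx ` G) \<noteq> {}"
  proof (rule compact_imp_fip[OF comp])
    show "closed T" if "T \<in> Kx ` G" for T using that cl by blast
    fix F' assume F': "finite F'" "F' \<subseteq> Kx ` G"
    then obtain CC where CC: "CC \<subseteq> G" "finite CC" "F' = Kx ` CC" using finite_subset_image[OF F'(1) F'(2)] by blast
    define P where "P = (\<lambda>i. (fst i, snd i - b)) ` insert (y0, w0) CC"
    have finP: "finite P" using CC(2) unfolding P_def by blast
    have neP: "P \<noteq> {}" unfolding P_def by blast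
    have inG: "snd i' \<in> A (fst i')" if "i' \<in> insert (y0,w0) CC" for i'
      using that CC(1) g0 unfolding G_def by auto
    have monoP: "inner (fst i - fst j) (snd i - snd j) \<ge> 0" if "i \<in> P" "j \<in> P" for i j
    proof -
      have iP: "i \<in> (\<lambda>i. (fst i, snd i - b)) ` insert (y0, w0) CC" using that(1) unfolding P_def .
      obtain i' where ij1': "i = (fst i', snd i' - b)" "i' \<in> insert (y0,w0) CC"
        by (rule imageE[OF iP])
      have jP: "j \<in> (\<lambda>i. (fst i, snd i - b)) ` insert (y0, w0) CC" using that(2) unfolding P_def .
      obtain j' where ij2': "j = (fst j', snd j' - b)" "j' \<in> insert (y0,w0) CC"
        by (rule imageE[OF jP])
      have ij1: "i' \<in> insert (y0,w0) CC" "i = (fst i', snd i' - b)" using ij1' by auto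
      have ij2: "j' \<in> insert (y0,w0) CC" "j = (fst j', snd j' - b)" using ij2' by auto
      have "inner (fst i - fst j) (snd i - snd j) = inner (fst i' - fst j') (snd i' - snd j')"
        using ij1(2) ij2(2) by simp
      also have "\<dots> \<ge> 0" using monoA[OF inG[OF ij1(1)] inG[OF ij2(1)]] .
      finally show ?thesis .
    qed
    obtain p where p: "\<forall>i\<in>P. inner (p - fst i) (p + snd i) \<le> 0"
      using finite_minty[OF finP neP monoP] by blast
    have pK: "p \<in> Kx i'" if "i' \<in> insert (y0,w0) CC" for i'
    proof -
      have mem: "(fst i', snd i' - b) \<in> P" unfolding P_def by (rule image_eqI[OF _ that]) simp
      have "inner (p - fst (fst i', snd i' - b)) (p + snd (fst i', snd i' - b)) \<le> 0" using bspec[OF p mem] .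
      then have "inner (p - fst i') (p + (snd i' - b)) \<le> 0" by simp
      then show ?thesis unfolding Kx_def by simp
    qed
    have "p \<in> Kx (y0,w0)" using pK by blast
    moreover have "p \<in> \<Inter>F'" unfolding CC(3) using pK by blast
    ultimately show "Kx (y0,w0) \<inter> \<Inter>F' \<noteq> {}" by blast
  qed
  then obtain p where pK: "\<And>i. i \<in> G \<Longrightarrow> p \<in> Kx i" by blast
  have hp: "inner (p - y) ((b - p) - v) \<ge> 0" if "v \<in> A y" for y v
  proof -
    have "(y, v) \<in> G" using that unfolding G_def by simp
    then have "p \<in> Kx (y, v)" by (rule pK)
    then have "inner (p - y) (p + (v - b)) \<le> 0" unfolding Kx_def by simp
    then show ?thesis unfolding aux_neg by simp
  qed
  define B where "B y = (if y = p then insert (b - p) (A p) else A y)" for y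
  have Bcases: "u \<in> A x \<or> (x = p \<and> u = b - p)" if "u \<in> B x" for u x
    using that unfolding B_def by (cases "x = p") auto
  have "monotone_op B"
    unfolding monotone_op_def
  proof (intro allI impI)
    fix x y u v assume u: "u \<in> B x" and v: "v \<in> B y"
    show "inner (x - y) (u - v) \<ge> 0"
    proof (cases "u \<in> A x")
      case uA: True
      show ?thesis
      proof (cases "v \<in> A y")
        case True then show ?thesis using monoA uA by blast
      next
        case False
        then have "y = p" "v = b - p" using Bcases[OF v] by auto
        then show ?thesis using hp[OF uA] aux_swap[of x p u "b - p"] by simp
      qed
    next
      case uA: False
      then have xu: "x = p" "u = b - p" using Bcases[OF u] by auto
      show ?thesis
      proof (cases "v \<in> A y")
        case True then show ?thesis using hp[OF True] xu by simp
      next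
        case False
        then have "y = p" "v = b - p" using Bcases[OF v] by auto
        then show ?thesis using xu by simp
      qed
    qed
  qed
  moreover have "\<forall>x. A x \<subseteq> B x" unfolding B_def by auto
  ultimately have BA: "B = A" using mm unfolding maximal_monotone_def by (elim conjE allE[of _ B]) blast
  have "b - p \<in> B p" unfolding B_def by simp
  then have "b - p \<in> A p" unfolding BA .
  then show ?thesis by blast
qed

lemma resolvent_prop:
  fixes A :: "'a::euclidean_space \<Rightarrow> 'a set"
  assumes mm: "maximal_monotone A" and g0: "w0 \<in> A y0"
  shows "b - resolvent A b \<in> A (resolvent A b)"
proof -
  have mono: "monotone_op A" using mm unfolding maximal_monotone_def by blast
  obtain p where p: "b - p \<in> A p" using minty_exists[OF mm g0] by blast
  have uniq: "q = p" if "b - q \<in> A q" for q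
  proof -
    have "inner (q - p) ((b - q) - (b - p)) \<ge> 0" using mono that p unfolding monotone_op_def by blast
    moreover have "inner (q - p) ((b - q) - (b - p)) = - inner (q - p) (q - p)"
      by (metis diff_diff_eq2 inner_minus_right minus_diff_eq diff_add_cancel add_diff_cancel_left')
    ultimately have "inner (q - p) (q - p) \<le> 0" by simp
    then have "inner (q - p) (q - p) = 0" using inner_ge_zero[of "q - p"] by linarith
    then show ?thesis by simp
  qed
  have "\<exists>!p. b - p \<in> A p" using p uniq by blast
  then show ?thesis unfolding resolvent_def by (rule theI')
qed

lemma resolvent_zero:
  fixes A :: "'a::real_inner \<Rightarrow> 'a set"
  assumes mono: "monotone_op A" and z: "0 \<in> A xs"
  shows "resolvent A xs = xs"
  unfolding resolvent_def
proof (rule the_equality)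
  show "xs - xs \<in> A xs" using z by simp
  fix q assume q: "xs - q \<in> A q"
  have "inner (q - xs) ((xs - q) - 0) \<ge> 0" using mono q z unfolding monotone_op_def by blast
  then have "inner (q - xs) (q - xs) \<le> 0"
    by (metis diff_0_right inner_minus_right minus_diff_eq neg_0_le_iff_le)
  then have "inner (q - xs) (q - xs) = 0" using inner_ge_zero[of "q - xs"] by linarith
  then show "q = xs" by simp
qed

lemma firm:
  fixes A :: "'a::euclidean_space \<Rightarrow> 'a set"
  assumes mm: "maximal_monotone A" and g0: "w0 \<in> A y0"
  shows "inner (yosida A x - yosida A y) (x - y) \<ge> inner (yosida A x - yosida A y) (yosida A x - yosida A y)"
proof -
  have mono: "monotone_op A" using mm unfolding maximal_monotone_def by blast
  have "inner (resolvent A x - resolvent A y) ((x - resolvent A x) - (y - resolvent A y)) \<ge> 0"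
    using mono resolvent_prop[OF mm g0, of x] resolvent_prop[OF mm g0, of y] unfolding monotone_op_def by blast
  moreover have "resolvent A x - resolvent A y = (x - y) - (yosida A x - yosida A y)"
    unfolding yosida_def by simp
  moreover have "(x - resolvent A x) - (y - resolvent A y) = yosida A x - yosida A y"
    unfolding yosida_def by simp
  ultimately have h: "inner ((x - y) - (yosida A x - yosida A y)) (yosida A x - yosida A y) \<ge> 0" by simp
  have "inner ((x - y) - (yosida A x - yosida A y)) (yosida A x - yosida A y)
     = inner (yosida A x - yosida A y) (x - y) - inner (yosida A x - yosida A y) (yosida A x - yosida A y)"
    by (rule aux_inner)
  then show ?thesis using h by linarith
qed

lemma extract_real:
  fixes r C k ip ww zz wz N g a bt :: real
  assumes r: "r \<ge> 2" and C: "0 < C" "C \<le> 1" and k: "k \<ge> 1" and ww0: "ww \<ge> 0" and ipv: "ip \<ge> ww"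
    and g: "g = r^2*(r-1)" and a: "a = 2*C*r*k" and bt: "bt = C*k^2 + (C*r - C^2)*k"
    and sq: "0 \<le> 4*g*(g*zz - a*wz) + a^2*ww"
    and E: "a*ip + bt*ww + (g*zz - a*wz) \<le> g*N"
  shows "ww \<le> (r^3 - r^2)*N/(C*k*(k + 3*r - C*(k+1))) \<and> ip \<le> (r^2 - r)*N/(2*C*k)"
proof -
  define D where "D = C*k*(k + 3*r - C*(k+1))"
  have gp: "g > 0" using g r by simp
  have ap: "a > 0" using a r C k by simp
  have Dp: "D > 0"
  proof -
    have "k + 3*r - C*(k+1) > 0"
    proof -
      have "C*(k+1) \<le> k + 1" using C k by (simp add: mult_left_le_one_le)
      then show ?thesis using r by linarith
    qed
    then show ?thesis unfolding D_def using C k by simp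
  qed
  have E4: "4*g*(a*ip + bt*ww + (g*zz - a*wz)) \<le> 4*g*(g*N)"
    using E gp by (intro mult_left_mono) auto
  have id1: "4*g*(a*ip + bt*ww + (g*zz - a*wz)) = 4*g*a*ip + (4*g*bt - a^2)*ww + (4*g*(g*zz - a*wz) + a^2*ww)"
    by algebra
  have main: "4*g*a*ip + (4*g*bt - a^2)*ww \<le> 4*g*(g*N)"
    using E4 sq unfolding id1 by linarith
  have h1: "4*g*bt - a^2 \<ge> 0"
  proof -
    have "4*g*bt - a^2 = 4*r^2*k*(C*k*(r - 1 - C) + (r-1)*C*(r - C))"
      unfolding g a bt by algebra
    moreover have "C*k*(r - 1 - C) \<ge> 0" using C k r by simp
    moreover have "(r-1)*C*(r - C) \<ge> 0" using C r by simp
    ultimately show ?thesis using k by simp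
  qed
  have h2: "4*g*(a + bt) - a^2 - 4*g*D = 4*C^2*r^2*k^2*(r-2)"
    unfolding g a bt D_def by algebra
  have h2': "4*g*(a + bt) - a^2 - 4*g*D \<ge> 0" unfolding h2 using r by simp
  have part2: "ip \<le> (r^2 - r)*N/(2*C*k)"
  proof -
    have "(4*g*bt - a^2)*ww \<ge> 0" using h1 ww0 by simp
    then have "4*g*a*ip \<le> 4*g*(g*N)" using main by linarith
    then have "(4*g)*(a*ip) \<le> (4*g)*(g*N)" by (simp add: mult.assoc)
    then have "a*ip \<le> g*N" using gp by (simp only: mult_le_cancel_left_pos)
    then have "ip \<le> g*N/a" using ap by (simp add: field_simps)
    also have "g*N/a = (r^2 - r)*N/(2*C*k)" unfolding g a using r C k
      by (simp add: field_simps power2_eq_square)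
    finally show ?thesis .
  qed
  have part1: "ww \<le> (r^3 - r^2)*N/(C*k*(k + 3*r - C*(k+1)))"
  proof -
    have "(4*g*a)*ww \<le> (4*g*a)*ip" using ipv gp ap by (intro mult_left_mono) auto
    moreover have "(4*g*(a + bt) - a^2)*ww = (4*g*a)*ww + (4*g*bt - a^2)*ww" by algebra
    ultimately have "(4*g*(a + bt) - a^2)*ww \<le> 4*g*(g*N)" using main by linarith
    moreover have "(4*g*(a + bt) - a^2 - 4*g*D)*ww \<ge> 0" using h2' ww0 by simp
    moreover have "(4*g*(a + bt) - a^2)*ww = (4*g)*(D*ww) + (4*g*(a + bt) - a^2 - 4*g*D)*ww" by algebra
    ultimately have "(4*g)*(D*ww) \<le> (4*g)*(g*N)" by linarith
    then have "D*ww \<le> g*N" using gp by (simp only: mult_le_cancel_left_pos)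
    then have "ww \<le> g*N/D" using Dp by (simp add: field_simps)
    also have "g*N/D = (r^3 - r^2)*N/(C*k*(k + 3*r - C*(k+1)))" unfolding g D_def
      by (simp add: power2_eq_square power3_eq_cube algebra_simps)
    finally show ?thesis .
  qed
  show ?thesis using part1 part2 by simp
qed

theorem theorem11:
  fixes A :: "real ^ 'n \<Rightarrow> (real ^ 'n) set"
    and xs :: "real ^ 'n"
    and x z :: "nat \<Rightarrow> real ^ 'n"
    and r C :: real
  assumes mm: "maximal_monotone A"
    and zero: "0 \<in> A xs"
    and r: "r \<ge> 2"
    and C: "0 < C" "C \<le> 1"
    and init: "x 0 = z 0"
    and z_def: "\<And>k. z k = (real k / r) *\<^sub>R (x (Suc k) - x k)
                      + (1 + real k / r) *\<^sub>R yosida A (x (Suc k)) + x (Suc k)"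
    and z_upd: "\<And>k. z (Suc k) = z k - (C / r) *\<^sub>R yosida A (x (Suc k))"
    and k: "k \<ge> 1"
  shows "(norm (yosida A (x k)))\<^sup>2
           \<le> (r^3 - r^2) * (norm (x 0 - xs))\<^sup>2
               / (C * real k * (real k + 3 * r - C * (real k + 1)))
       \<and> inner (yosida A (x k)) (x k - xs)
           \<le> (r^2 - r) * (norm (x 0 - xs))\<^sup>2 / (2 * C * real k)"
proof -
  have mono: "monotone_op A" using mm unfolding maximal_monotone_def by blast
  have yxs: "yosida A xs = 0" unfolding yosida_def using resolvent_zero[OF mono zero] by simp
  define v where "v j = yosida A (x j)" for j
  define E where "E j = 2*C*r*real j * inner (v j) (x j - xs) + (C*(real j)^2 + (C*r - C^2)*real j) * inner (v j) (v j)
     + r^2*(r-1)*inner (z j - xs) (z j - xs) - 2*C*r*real j * inner (v j) (z j - xs)" for j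
  have step: "E (Suc j) \<le> E j" for j
  proof -
    have zk: "z j - xs = (real j/r) *\<^sub>R ((x (Suc j) - xs) - (x j - xs)) + (1 + real j/r) *\<^sub>R v (Suc j) + (x (Suc j) - xs)"
      using z_def[of j] unfolding v_def by simp
    have zk1: "z (Suc j) - xs = (z j - xs) - (C/r) *\<^sub>R v (Suc j)"
      using z_upd[of j] unfolding v_def by simp
    have s1: "inner (v (Suc j)) (x (Suc j) - xs) \<ge> inner (v (Suc j)) (v (Suc j))"
      using firm[OF mm zero, of "x (Suc j)" xs] unfolding v_def yxs by simp
    have s2: "inner (v (Suc j) - v j) ((x (Suc j) - xs) - (x j - xs)) \<ge> inner (v (Suc j) - v j) (v (Suc j) - v j)"
      using firm[OF mm zero, of "x (Suc j)" "x j"] unfolding v_def by simp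
    note L = lyap_step[OF r C _ zk zk1 s1 s2]
    have rs: "real (Suc j) = real j + 1" by simp
    show ?thesis unfolding E_def rs using L by simp
  qed
  have decr: "E j \<le> E 0" for j
  proof (induction j)
    case 0 then show ?case by simp
  next
    case (Suc j) then show ?case using step[of j] by linarith
  qed
  have E0: "E 0 = r^2*(r-1)*(norm (x 0 - xs))^2"
    unfolding E_def using init by (simp add: power2_norm_eq_inner)
  define ip where "ip = inner (v k) (x k - xs)"
  define ww where "ww = inner (v k) (v k)"
  define zz where "zz = inner (z k - xs) (z k - xs)"
  define wz where "wz = inner (v k) (z k - xs)"
  define g where "g = r^2*(r-1)"
  define a where "a = 2*C*r*real k"
  define bt where "bt = C*(real k)^2 + (C*r - C^2)*real k"
  have kr: "real k \<ge> 1" using k by simp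
  have ww0: "ww \<ge> 0" unfolding ww_def by simp
  have ipv: "ip \<ge> ww" unfolding ip_def ww_def v_def
    using firm[OF mm zero, of "x k" xs] unfolding yxs by simp
  have sq: "0 \<le> 4*g*(g*zz - a*wz) + a^2*ww"
  proof -
    have "0 \<le> inner ((2*g) *\<^sub>R (z k - xs) - a *\<^sub>R v k) ((2*g) *\<^sub>R (z k - xs) - a *\<^sub>R v k)" by simp
    also have "\<dots> = 4*g*(g*zz - a*wz) + a^2*ww" unfolding zz_def wz_def ww_def
      by (simp add: inner_diff_left inner_diff_right inner_commute power2_eq_square algebra_simps)
    finally show ?thesis .
  qed
  have EE: "a*ip + bt*ww + (g*zz - a*wz) \<le> g*(norm (x 0 - xs))^2"
    using decr[of k] unfolding E0 unfolding E_def ip_def ww_def zz_def wz_def g_def a_def bt_def v_def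
    by (simp add: algebra_simps)
  note res = extract_real[OF r C kr ww0 ipv g_def a_def bt_def sq EE]
  show ?thesis using res unfolding ip_def ww_def v_def by (simp add: power2_norm_eq_inner)
qed

end
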